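(* Let $t\ge 2$, let $n_1,\dots,n_t$ be positive integers, and let $G=K_{n_1,\dots,n_t}$ be the complete $t$-partite graph with partite sets $V_1,\dots,V_t$, $|V_i|=n_i$. Let $N_t=\{1,\dots,t\}$ and $f(I)=\sum_{i\in I}n_i$ for $I\subseteq N_t$. Let $p$ be a positive integer with $f(N_t)>p$. Then $|I_D|\le t-2$ for every $\gamma_p(G)$-set $D$ with $f(I_D)<p$.
   Context: A set $S\subseteq V(G)$ is a $p$-dominating set of $G$ if every vertex $v\in V(G)\setminus S$ has at least $p$ neighbors in $S$. The $p$-domination number $\gamma_p(G)$ is the minimum cardinality of a $p$-dominating set of $G$, and a $\gamma_p(G)$-set is a $p$-dominating set of cardinality $\gamma_p(G)$. For $D\subseteq V(G)$ write $D_i=V_i\cap D$ for $i\in N_t$ and $I_D=\{i\in N_t: |D_i|=|V_i|\}$. *)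

theory Defs
  imports Main
begin

text \<open>A graph is given by a finite vertex set V and a symmetric irreflexive adjacency
relation E.\<close>

definition p_dominating :: "'a set \<Rightarrow> ('a \<Rightarrow> 'a \<Rightarrow> bool) \<Rightarrow> nat \<Rightarrow> 'a set \<Rightarrow> bool" where
  "p_dominating V E p S \<longleftrightarrow> S \<subseteq> V \<and> (\<forall>v \<in> V - S. card {u \<in> S. E v u} \<ge> p)"

definition gamma_p :: "'a set \<Rightarrow> ('a \<Rightarrow> 'a \<Rightarrow> bool) \<Rightarrow> nat \<Rightarrow> nat" where
  "gamma_p V E p = Min (card ` {S. p_dominating V E p S})"

definition gamma_p_set :: "'a set \<Rightarrow> ('a \<Rightarrow> 'a \<Rightarrow> bool) \<Rightarrow> nat \<Rightarrow> 'a set \<Rightarrow> bool" where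
  "gamma_p_set V E p S \<longleftrightarrow> p_dominating V E p S \<and> card S = gamma_p V E p"

text \<open>Complete t-partite graph K_{n_1,...,n_t}: vertices are pairs (i,j) with
1 \<le> i \<le> t and j < n i; the partite set V_i consists of the pairs with first component i;
two vertices are adjacent iff they lie in different partite sets.\<close>

definition part :: "(nat \<Rightarrow> nat) \<Rightarrow> nat \<Rightarrow> (nat \<times> nat) set" where
  "part n i = {(i, j) | j. j < n i}"

definition cmp_vertices :: "nat \<Rightarrow> (nat \<Rightarrow> nat) \<Rightarrow> (nat \<times> nat) set" where
  "cmp_vertices t n = (\<Union>i\<in>{1..t}. part n i)"

definition cmp_adj :: "nat \<times> nat \<Rightarrow> nat \<times> nat \<Rightarrow> bool" where
  "cmp_adj u v \<longleftrightarrow> fst u \<noteq> fst v"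

text \<open>I_D = {i in N_t : |D_i| = |V_i|} where D_i = V_i \<inter> D.\<close>

definition full_parts :: "nat \<Rightarrow> (nat \<Rightarrow> nat) \<Rightarrow> (nat \<times> nat) set \<Rightarrow> nat set" where
  "full_parts t n D = {i \<in> {1..t}. card (part n i \<inter> D) = card (part n i)}"

end

theory Submission
  imports Defs
begin

lemma part_eq: "part n i = (\<lambda>j. (i,j)) ` {..<n i}"
  unfolding part_def by auto

lemma card_part: "card (part n i) = n i"
  unfolding part_eq by (subst card_image) (auto simp: inj_on_def)

lemma finite_part: "finite (part n i)"
  unfolding part_eq by simp

theorem lemma3:
  fixes t p :: nat and n :: "nat \<Rightarrow> nat" and D :: "(nat \<times> nat) set"
  assumes "t \<ge> 2"
    and "\<forall>i\<in>{1..t}. n i > 0"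
    and "p > 0"
    and "(\<Sum>i\<in>{1..t}. n i) > p"
    and "gamma_p_set (cmp_vertices t n) cmp_adj p D"
    and "(\<Sum>i\<in>full_parts t n D. n i) < p"
  shows "card (full_parts t n D) \<le> t - 2"
proof (rule ccontr)
  define F where "F = full_parts t n D"
  assume "\<not> card (full_parts t n D) \<le> t - 2"
  hence cF: "card F \<ge> t - 1" unfolding F_def by simp
  have Fsub: "F \<subseteq> {1..t}" unfolding F_def full_parts_def by auto
  have dom: "D \<subseteq> cmp_vertices t n"
    "\<forall>v \<in> cmp_vertices t n - D. card {u \<in> D. cmp_adj v u} \<ge> p"
    using assms(5) unfolding gamma_p_set_def p_dominating_def by auto
  show False
  proof (cases "F = {1..t}")
    case True
    then show ?thesis using assms(4,6) unfolding F_def by simp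
  next
    case False
    then obtain j where j: "j \<in> {1..t}" "j \<notin> F" using Fsub by blast
    have "F \<subseteq> {1..t} - {j}" using Fsub j by auto
    moreover have "card ({1..t} - {j}) = t - 1" using j by simp
    ultimately have Feq: "F = {1..t} - {j}" using cF
      by (metis card_seteq finite_Diff finite_atLeastAtMost)
    have "card (part n j \<inter> D) \<noteq> card (part n j)" using j unfolding F_def full_parts_def by auto
    hence "part n j \<inter> D \<noteq> part n j" by metis
    then obtain v where v: "v \<in> part n j" "v \<notin> D" by blast
    have vV: "v \<in> cmp_vertices t n" using v j unfolding cmp_vertices_def by auto
    have "{u \<in> D. cmp_adj v u} \<subseteq> (\<Union>i\<in>F. part n i)"
    proof
      fix u assume u: "u \<in> {u \<in> D. cmp_adj v u}"
      then obtain i where i: "i \<in> {1..t}" "u \<in> part n i" using dom(1) unfolding cmp_vertices_def by blast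
      have "fst v = j" using v(1) unfolding part_def by auto
      moreover have "fst u = i" using i(2) unfolding part_def by auto
      ultimately have "i \<noteq> j" using u unfolding cmp_adj_def by auto
      thus "u \<in> (\<Union>i\<in>F. part n i)" using i Feq by auto
    qed
    hence "card {u \<in> D. cmp_adj v u} \<le> card (\<Union>i\<in>F. part n i)"
      by (intro card_mono) (auto simp: finite_part Feq)
    also have "\<dots> \<le> (\<Sum>i\<in>F. card (part n i))" by (rule card_UN_le) (simp add: Feq)
    also have "\<dots> = (\<Sum>i\<in>F. n i)" by (simp add: card_part)
    finally have "card {u \<in> D. cmp_adj v u} < p" using assms(6) unfolding F_def by simp
    moreover have "card {u \<in> D. cmp_adj v u} \<ge> p" using dom(2) vV v(2) by auto
    ultimately show False by simp
  qed
qed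

end
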